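(* Let $(V,d)$ be a finite metric space with root $r\in V$ and let $\pi$ be any master tour on $(V,d)$. Let $\{q_v\}_{v\in V}$ and $\{\bar p_v\}_{v\in V}$ be probabilities in $[0,1]$ and let $\beta\le 1$ be a constant such that $\beta\bar p_v\le q_v\le\bar p_v$ for each $v\in V$. Then the expected latency of $\pi$ under probabilities $\{q_v\}_{v\in V}$ is at least $\beta^3$ times the expected latency of $\pi$ under probabilities $\{\bar p_v\}_{v\in V}$.
   Context: A master tour $\pi$ is a tour starting at the root $r$ visiting all vertices of $V$. For an active set $A\subseteq V$, $\pi_A$ visits the vertices of $A$ starting from $r$ in the order of $\pi$ (shortcutting inactive vertices); the latency of $v\in A$ is the length of the path from $r$ to $v$ along $\pi_A$. The expected latency of $\pi$ under probabilities $\{x_v\}$ is $\mathbb{E}_A[\sum_{v\in A}(\text{latency of }v\text{ in }\pi_A)]$ where $A$ contains each $v$ independently with probability $x_v$. *)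

theory Defs
  imports Complex_Main
begin

definition finite_metric :: "'a set \<Rightarrow> ('a \<Rightarrow> 'a \<Rightarrow> real) \<Rightarrow> bool" where
  "finite_metric V d \<longleftrightarrow> finite V \<and>
     (\<forall>x\<in>V. \<forall>y\<in>V. d x y \<ge> 0 \<and> (d x y = 0 \<longleftrightarrow> x = y) \<and> d x y = d y x) \<and>
     (\<forall>x\<in>V. \<forall>y\<in>V. \<forall>z\<in>V. d x z \<le> d x y + d y z)"

definition master_tour :: "'a set \<Rightarrow> 'a \<Rightarrow> 'a list \<Rightarrow> bool" where
  "master_tour V r \<pi> \<longleftrightarrow> \<pi> \<noteq> [] \<and> hd \<pi> = r \<and> distinct \<pi> \<and> set \<pi> = V"

definition path_len :: "('a \<Rightarrow> 'a \<Rightarrow> real) \<Rightarrow> 'a list \<Rightarrow> real" where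
  "path_len d xs = sum_list (map (\<lambda>(a,b). d a b) (zip xs (tl xs)))"

definition restrict_tour :: "'a list \<Rightarrow> 'a set \<Rightarrow> 'a list" where
  "restrict_tour \<pi> A = hd \<pi> # filter (\<lambda>v. v \<in> A) (tl \<pi>)"

definition latency :: "('a \<Rightarrow> 'a \<Rightarrow> real) \<Rightarrow> 'a list \<Rightarrow> 'a \<Rightarrow> real" where
  "latency d xs v = path_len d (takeWhile (\<lambda>u. u \<noteq> v) xs @ [v])"

definition set_prob :: "'a set \<Rightarrow> ('a \<Rightarrow> real) \<Rightarrow> 'a set \<Rightarrow> real" where
  "set_prob V x A = (\<Prod>v\<in>A. x v) * (\<Prod>v\<in>V - A. 1 - x v)"

definition expected_latency ::
  "'a set \<Rightarrow> ('a \<Rightarrow> 'a \<Rightarrow> real) \<Rightarrow> 'a list \<Rightarrow> ('a \<Rightarrow> real) \<Rightarrow> real" where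
  "expected_latency V d \<pi> x =
     (\<Sum>A\<in>Pow V. set_prob V x A * (\<Sum>v\<in>A. latency d (restrict_tour \<pi> A) v))"

end

theory Submission
  imports Defs
begin

definition Ex :: "'a set \<Rightarrow> ('a \<Rightarrow> real) \<Rightarrow> ('a set \<Rightarrow> real) \<Rightarrow> real" where
  "Ex S p f = (\<Sum>A\<in>Pow S. set_prob S p A * f A)"

lemma Ex_insert:
  assumes "finite S" "a \<notin> S"
  shows "Ex (insert a S) p f = p a * Ex S p (\<lambda>A. f (insert a A)) + (1 - p a) * Ex S p f"
proof -
  have inj: "inj_on (insert a) (Pow S)" using assms(2) by (auto simp: inj_on_def)
  have disj: "Pow S \<inter> insert a ` Pow S = {}" using assms(2) by auto
  have sp1: "set_prob (insert a S) p A = (1 - p a) * set_prob S p A" if "A \<subseteq> S" for A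
  proof -
    have "insert a S - A = insert a (S - A)" using that assms(2) by auto
    then show ?thesis using assms that unfolding set_prob_def by simp
  qed
  have sp2: "set_prob (insert a S) p (insert a A) = p a * set_prob S p A" if "A \<subseteq> S" for A
  proof -
    have "insert a S - insert a A = S - A" using that assms(2) by auto
    moreover have "a \<notin> A" using that assms(2) by auto
    moreover have "finite A" using that assms(1) finite_subset by auto
    ultimately show ?thesis unfolding set_prob_def by simp
  qed
  have "Ex (insert a S) p f = (\<Sum>A\<in>Pow S. set_prob (insert a S) p A * f A)
       + (\<Sum>A\<in>insert a ` Pow S. set_prob (insert a S) p A * f A)"
    unfolding Ex_def Pow_insert using assms disj by (simp add: sum.union_disjoint)
  also have "(\<Sum>A\<in>insert a ` Pow S. set_prob (insert a S) p A * f A)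
      = (\<Sum>A\<in>Pow S. set_prob (insert a S) p (insert a A) * f (insert a A))"
    using inj by (simp add: sum.reindex)
  also have "\<dots> = p a * Ex S p (\<lambda>A. f (insert a A))"
    unfolding Ex_def sum_distrib_left by (rule sum.cong) (auto simp: sp2)
  also have "(\<Sum>A\<in>Pow S. set_prob (insert a S) p A * f A) = (1 - p a) * Ex S p f"
    unfolding Ex_def sum_distrib_left by (rule sum.cong) (auto simp: sp1)
  finally show ?thesis by simp
qed

lemma Ex_const: "finite S \<Longrightarrow> Ex S p (\<lambda>_. c) = c"
proof (induction S rule: finite_induct)
  case empty
  then show ?case by (simp add: Ex_def set_prob_def)
next
  case (insert a S)
  then show ?case by (simp add: Ex_insert algebra_simps)
qed

lemma Ex_add: "Ex S p (\<lambda>A. f A + g A) = Ex S p f + Ex S p g"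
  unfolding Ex_def by (simp add: algebra_simps sum.distrib)

lemma Ex_cmult: "Ex S p (\<lambda>A. c * f A) = c * Ex S p f"
  unfolding Ex_def by (simp add: algebra_simps sum_distrib_left)

lemma Ex_cong: "(\<And>A. A \<subseteq> S \<Longrightarrow> f A = g A) \<Longrightarrow> Ex S p f = Ex S p g"
  unfolding Ex_def by (rule sum.cong) auto

fun tot :: "('a \<Rightarrow> 'a \<Rightarrow> real) \<Rightarrow> 'a \<Rightarrow> 'a list \<Rightarrow> real" where
  "tot d u [] = 0"
| "tot d u (w # ws) = d u w * (1 + real (length ws)) + tot d w ws"

fun Nr :: "('a \<Rightarrow> real) \<Rightarrow> 'a list \<Rightarrow> real" where
  "Nr p [] = 0"
| "Nr p (x # xs) = p x + Nr p xs"

fun Ar :: "('a \<Rightarrow> real) \<Rightarrow> ('a \<Rightarrow> 'a \<Rightarrow> real) \<Rightarrow> 'a \<Rightarrow> 'a list \<Rightarrow> real" where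
  "Ar p d u [] = 0"
| "Ar p d u (x # xs) = p x * d u x * (1 + Nr p xs) + (1 - p x) * Ar p d u xs"

fun Dr :: "('a \<Rightarrow> real) \<Rightarrow> ('a \<Rightarrow> 'a \<Rightarrow> real) \<Rightarrow> 'a list \<Rightarrow> real" where
  "Dr p d [] = 0"
| "Dr p d (x # xs) = p x * Ar p d x xs + Dr p d xs"

lemma filter_ins: "x \<notin> set xs \<Longrightarrow> filter (\<lambda>v. v \<in> insert x A) xs = filter (\<lambda>v. v \<in> A) xs"
  by (rule filter_cong) auto

lemma filter_ins2: "x \<notin> set xs \<Longrightarrow> filter (\<lambda>v. v = x \<or> v \<in> A) xs = filter (\<lambda>v. v \<in> A) xs"
  by (rule filter_cong) auto

lemma N_eq: "distinct xs \<Longrightarrow> Ex (set xs) p (\<lambda>A. real (length (filter (\<lambda>v. v \<in> A) xs))) = Nr p xs"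
proof (induction xs)
  case Nil
  then show ?case by (simp add: Ex_const)
next
  case (Cons x xs)
  have e1: "Ex (set xs) p (\<lambda>A. real (length (filter (\<lambda>v. v \<in> insert x A) (x # xs))))
      = Ex (set xs) p (\<lambda>A. 1 + real (length (filter (\<lambda>v. v \<in> A) xs)))"
    using Cons.prems by (simp add: filter_ins filter_ins2)
  have e2: "Ex (set xs) p (\<lambda>A. real (length (filter (\<lambda>v. v \<in> A) (x # xs))))
      = Ex (set xs) p (\<lambda>A. real (length (filter (\<lambda>v. v \<in> A) xs)))"
    using Cons.prems by (intro Ex_cong) auto
  have s: "Ex (insert x (set xs)) p (\<lambda>A. real (length (filter (\<lambda>v. v \<in> A) (x # xs))))
     = p x * Ex (set xs) p (\<lambda>A. real (length (filter (\<lambda>v. v \<in> insert x A) (x # xs))))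
     + (1 - p x) * Ex (set xs) p (\<lambda>A. real (length (filter (\<lambda>v. v \<in> A) (x # xs))))"
    by (rule Ex_insert) (use Cons.prems in auto)
  show ?case unfolding set_simps s e1 e2 using Cons
    by (simp add: Ex_add Ex_const algebra_simps)
qed

lemma G_eq: "distinct xs \<Longrightarrow> Ex (set xs) p (\<lambda>A. tot d u (filter (\<lambda>v. v \<in> A) xs)) = Ar p d u xs + Dr p d xs"
proof (induction xs arbitrary: u)
  case Nil
  then show ?case by (simp add: Ex_const)
next
  case (Cons x xs)
  have e1: "Ex (set xs) p (\<lambda>A. tot d u (filter (\<lambda>v. v \<in> insert x A) (x # xs)))
      = Ex (set xs) p (\<lambda>A. d u x * (1 + real (length (filter (\<lambda>v. v \<in> A) xs))) + tot d x (filter (\<lambda>v. v \<in> A) xs))"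
    using Cons.prems by (simp add: filter_ins filter_ins2)
  also have "\<dots> = d u x * (1 + Nr p xs) + Ar p d x xs + Dr p d xs"
    using Cons by (simp add: Ex_add Ex_cmult Ex_const N_eq)
  finally have e1': "Ex (set xs) p (\<lambda>A. tot d u (filter (\<lambda>v. v \<in> insert x A) (x # xs)))
      = d u x * (1 + Nr p xs) + Ar p d x xs + Dr p d xs" .
  have e2: "Ex (set xs) p (\<lambda>A. tot d u (filter (\<lambda>v. v \<in> A) (x # xs)))
      = Ex (set xs) p (\<lambda>A. tot d u (filter (\<lambda>v. v \<in> A) xs))"
    using Cons.prems by (intro Ex_cong) auto
  have s: "Ex (insert x (set xs)) p (\<lambda>A. tot d u (filter (\<lambda>v. v \<in> A) (x # xs)))
     = p x * Ex (set xs) p (\<lambda>A. tot d u (filter (\<lambda>v. v \<in> insert x A) (x # xs)))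
     + (1 - p x) * Ex (set xs) p (\<lambda>A. tot d u (filter (\<lambda>v. v \<in> A) (x # xs)))"
    by (rule Ex_insert) (use Cons.prems in auto)
  show ?case unfolding set_simps s e1' e2 using Cons
    by (simp add: algebra_simps)
qed

lemma path_len_cons2: "path_len d (a # b # ys) = d a b + path_len d (b # ys)"
  unfolding path_len_def by simp

lemma path_len_single: "path_len d [a] = 0"
  unfolding path_len_def by simp

lemma latency_cons:
  assumes "v \<in> set (w # ws)" "v \<noteq> u"
  shows "latency d (u # w # ws) v = d u w + latency d (w # ws) v"
proof (cases "v = w")
  case True
  then show ?thesis using assms unfolding latency_def by (simp add: path_len_cons2 path_len_single)
next
  case False
  then show ?thesis using assms unfolding latency_def by (simp add: path_len_cons2)
qed

lemma latency_hd: "latency d (u # ws) u = 0"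
  unfolding latency_def by (simp add: path_len_single)

lemma sum_latency: "distinct (u # ws) \<Longrightarrow> (\<Sum>v\<in>set ws. latency d (u # ws) v) = tot d u ws"
proof (induction ws arbitrary: u)
  case Nil
  then show ?case by simp
next
  case (Cons w ws)
  have "(\<Sum>v\<in>set (w # ws). latency d (u # w # ws) v) = (\<Sum>v\<in>set (w # ws). d u w + latency d (w # ws) v)"
    using Cons.prems by (intro sum.cong) (auto intro: latency_cons)
  also have "\<dots> = real (card (set (w # ws))) * d u w + (\<Sum>v\<in>set (w # ws). latency d (w # ws) v)"
    by (simp add: sum.distrib)
  also have "(\<Sum>v\<in>set (w # ws). latency d (w # ws) v) = (\<Sum>v\<in>set ws. latency d (w # ws) v)"
    using Cons.prems by (simp add: latency_hd)
  also have "\<dots> = tot d w ws" using Cons by simp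
  also have "card (set (w # ws)) = 1 + length ws" using Cons.prems by (simp add: distinct_card)
  finally show ?case by (simp add: algebra_simps)
qed

lemma sum_latency_A:
  assumes "distinct (r # xs)" "A \<subseteq> insert r (set xs)"
  shows "(\<Sum>v\<in>A. latency d (r # filter (\<lambda>v. v \<in> A) xs) v) = tot d r (filter (\<lambda>v. v \<in> A) xs)"
proof -
  let ?ys = "filter (\<lambda>v. v \<in> A) xs"
  have dis: "distinct (r # ?ys)" using assms(1) by auto
  show ?thesis
  proof (cases "r \<in> A")
    case True
    then have "A = insert r (set ?ys)" using assms(2) by auto
    moreover have "r \<notin> set ?ys" using dis by simp
    ultimately have "(\<Sum>v\<in>A. latency d (r # ?ys) v) = latency d (r # ?ys) r + (\<Sum>v\<in>set ?ys. latency d (r # ?ys) v)"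
      by (metis List.finite_set sum.insert)
    then show ?thesis using dis by (simp only: latency_hd sum_latency)
  next
    case False
    then have "A = set ?ys" using assms(2) by auto
    then show ?thesis using dis sum_latency by metis
  qed
qed

lemma Nr_nonneg: "\<forall>v\<in>set xs. 0 \<le> p v \<Longrightarrow> Nr p xs \<ge> 0"
  by (induction xs) auto

lemma Ar_nonneg: "\<forall>v\<in>set xs. 0 \<le> p v \<and> p v \<le> 1 \<Longrightarrow> \<forall>v\<in>set xs. 0 \<le> d u v \<Longrightarrow> Ar p d u xs \<ge> 0"
proof (induction xs)
  case Nil then show ?case by simp
next
  case (Cons x xs)
  have "Nr p xs \<ge> 0" using Cons.prems by (intro Nr_nonneg) auto
  then show ?case using Cons by (simp add: mult_nonneg_nonneg)
qed

lemma Dr_nonneg: "\<forall>v\<in>set xs. 0 \<le> p v \<and> p v \<le> 1 \<Longrightarrow> \<forall>a\<in>set xs. \<forall>b\<in>set xs. 0 \<le> d a b \<Longrightarrow> Dr p d xs \<ge> 0"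
proof (induction xs)
  case Nil then show ?case by simp
next
  case (Cons x xs)
  have "Ar p d x xs \<ge> 0" using Cons.prems by (intro Ar_nonneg) auto
  then show ?case using Cons by (simp add: mult_nonneg_nonneg)
qed

locale cmp =
  fixes p q :: "'a \<Rightarrow> real" and \<beta> :: real
  assumes b0: "0 \<le> \<beta>" and b1: "\<beta> \<le> 1"
begin

lemma Nr_ge: "\<forall>v\<in>set xs. \<beta> * p v \<le> q v \<Longrightarrow> Nr q xs \<ge> \<beta> * Nr p xs"
  by (induction xs) (auto simp: algebra_simps)

lemma Ar_ge:
  assumes "\<forall>v\<in>set xs. 0 \<le> p v \<and> p v \<le> 1 \<and> 0 \<le> q v \<and> q v \<le> 1 \<and> \<beta> * p v \<le> q v \<and> q v \<le> p v"
    and "\<forall>v\<in>set xs. 0 \<le> d u v"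
  shows "Ar q d u xs \<ge> \<beta>^2 * Ar p d u xs"
  using assms
proof (induction xs)
  case Nil then show ?case by simp
next
  case (Cons x xs)
  have N0: "Nr p xs \<ge> 0" using Cons.prems by (intro Nr_nonneg) auto
  have N1: "Nr q xs \<ge> \<beta> * Nr p xs" using Cons.prems by (intro Nr_ge) auto
  have A0: "Ar p d u xs \<ge> 0" using Cons.prems by (intro Ar_nonneg) auto
  have IH: "Ar q d u xs \<ge> \<beta>^2 * Ar p d u xs" using Cons by auto
  have px: "0 \<le> q x" "0 \<le> p x" "p x \<le> 1" "\<beta> * p x \<le> q x" "q x \<le> p x" and dx: "0 \<le> d u x" using Cons.prems by auto
  have "1 + Nr q xs \<ge> \<beta> * (1 + Nr p xs)" using N1 b1 by (simp add: algebra_simps)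
  moreover have "\<beta> * (1 + Nr p xs) \<ge> 0" using b0 N0 by simp
  ultimately have t1: "(\<beta> * p x) * (\<beta> * (1 + Nr p xs)) \<le> q x * (1 + Nr q xs)"
    using px b0 by (intro mult_mono) auto
  have t1': "\<beta>^2 * (p x * d u x * (1 + Nr p xs)) \<le> q x * d u x * (1 + Nr q xs)"
  proof -
    have "\<beta>^2 * (p x * d u x * (1 + Nr p xs)) = ((\<beta> * p x) * (\<beta> * (1 + Nr p xs))) * d u x"
      by (simp add: power2_eq_square algebra_simps)
    also have "\<dots> \<le> (q x * (1 + Nr q xs)) * d u x" using t1 dx by (rule mult_right_mono)
    finally show ?thesis by (simp add: algebra_simps)
  qed
  have t2: "(1 - p x) * (\<beta>^2 * Ar p d u xs) \<le> (1 - q x) * Ar q d u xs"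
    using px IH A0 b0 by (intro mult_mono) auto
  show ?case using t1' t2 by (simp add: algebra_simps)
qed

lemma Dr_ge:
  assumes "\<forall>v\<in>set xs. 0 \<le> p v \<and> p v \<le> 1 \<and> 0 \<le> q v \<and> q v \<le> 1 \<and> \<beta> * p v \<le> q v \<and> q v \<le> p v"
    and "\<forall>a\<in>set xs. \<forall>b\<in>set xs. 0 \<le> d a b"
  shows "Dr q d xs \<ge> \<beta>^3 * Dr p d xs"
  using assms
proof (induction xs)
  case Nil then show ?case by simp
next
  case (Cons x xs)
  have A0: "Ar p d x xs \<ge> 0" using Cons.prems by (intro Ar_nonneg) auto
  have A1: "Ar q d x xs \<ge> \<beta>^2 * Ar p d x xs" using Cons.prems by (intro Ar_ge) auto
  have IH: "Dr q d xs \<ge> \<beta>^3 * Dr p d xs" using Cons by auto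
  have px: "0 \<le> q x" "0 \<le> p x" "\<beta> * p x \<le> q x" using Cons.prems by auto
  have "(\<beta> * p x) * (\<beta>^2 * Ar p d x xs) \<le> q x * Ar q d x xs"
    using px A0 A1 b0 by (intro mult_mono) auto
  moreover have "(\<beta> * p x) * (\<beta>^2 * Ar p d x xs) = \<beta>^3 * (p x * Ar p d x xs)"
    by (simp add: power2_eq_square power3_eq_cube algebra_simps)
  ultimately have "\<beta>^3 * (p x * Ar p d x xs) \<le> q x * Ar q d x xs" by simp
  then show ?case using IH by (simp add: distrib_left)
qed

end

lemma EL_eq:
  assumes "distinct (r # xs)"
  shows "expected_latency (set (r # xs)) d (r # xs) p = Ar p d r xs + Dr p d xs"
proof -
  have "expected_latency (set (r # xs)) d (r # xs) p = Ex (set (r # xs)) p (\<lambda>A. tot d r (filter (\<lambda>v. v \<in> A) xs))"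
    unfolding expected_latency_def Ex_def restrict_tour_def
    using assms by (intro sum.cong refl) (simp add: sum_latency_A)
  also have "\<dots> = Ex (set xs) p (\<lambda>A. tot d r (filter (\<lambda>v. v \<in> A) xs))"
    using assms by (simp add: Ex_insert filter_ins filter_ins2 algebra_simps)
  also have "\<dots> = Ar p d r xs + Dr p d xs" using assms by (simp add: G_eq)
  finally show ?thesis .
qed

theorem lemma3:
  fixes V :: "'a set" and d :: "'a \<Rightarrow> 'a \<Rightarrow> real" and r :: 'a and \<pi> :: "'a list"
    and q pbar :: "'a \<Rightarrow> real" and \<beta> :: real
  assumes "finite_metric V d" and "r \<in> V" and "master_tour V r \<pi>"
    and "\<forall>v\<in>V. 0 \<le> q v \<and> q v \<le> 1" and "\<forall>v\<in>V. 0 \<le> pbar v \<and> pbar v \<le> 1"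
    and "\<beta> \<le> 1"
    and "\<forall>v\<in>V. \<beta> * pbar v \<le> q v \<and> q v \<le> pbar v"
  shows "expected_latency V d \<pi> q \<ge> \<beta> ^ 3 * expected_latency V d \<pi> pbar"
proof -
  obtain xs where pi: "\<pi> = r # xs" using assms(3) unfolding master_tour_def by (cases \<pi>) auto
  have dist: "distinct (r # xs)" and Vs: "V = set (r # xs)" using assms(3) pi unfolding master_tour_def by auto
  have dnn: "\<forall>a\<in>V. \<forall>b\<in>V. 0 \<le> d a b" using assms(1) unfolding finite_metric_def by auto
  have pv: "\<forall>v\<in>set xs. 0 \<le> pbar v \<and> pbar v \<le> 1" "\<forall>v\<in>set xs. 0 \<le> q v \<and> q v \<le> 1"
    using assms(4,5) Vs by auto
  have Ep: "expected_latency V d \<pi> pbar = Ar pbar d r xs + Dr pbar d xs"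
    and Eq: "expected_latency V d \<pi> q = Ar q d r xs + Dr q d xs"
    using EL_eq[OF dist] Vs pi by auto
  have Ap0: "Ar pbar d r xs \<ge> 0" using pv dnn Vs by (intro Ar_nonneg) auto
  have Dp0: "Dr pbar d xs \<ge> 0" using pv dnn Vs by (intro Dr_nonneg) auto
  have Aq0: "Ar q d r xs \<ge> 0" using pv dnn Vs by (intro Ar_nonneg) auto
  have Dq0: "Dr q d xs \<ge> 0" using pv dnn Vs by (intro Dr_nonneg) auto
  show ?thesis
  proof (cases "\<beta> \<ge> 0")
    case False
    have "\<beta> * \<beta>^2 \<le> 0" using False by (simp add: mult_nonpos_nonneg)
    then have "\<beta>^3 \<le> 0" by (simp add: power2_eq_square power3_eq_cube)
    then have "\<beta>^3 * (Ar pbar d r xs + Dr pbar d xs) \<le> 0" using Ap0 Dp0 by (simp add: mult_nonpos_nonneg)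
    then show ?thesis using Ep Eq Aq0 Dq0 by simp
  next
    case True
    interpret cmp pbar q \<beta> using True assms(6) by unfold_locales
    have h: "\<forall>v\<in>set xs. 0 \<le> pbar v \<and> pbar v \<le> 1 \<and> 0 \<le> q v \<and> q v \<le> 1 \<and> \<beta> * pbar v \<le> q v \<and> q v \<le> pbar v"
      using assms(4,5,7) Vs by auto
    have A: "Ar q d r xs \<ge> \<beta>^2 * Ar pbar d r xs" using h dnn Vs by (intro Ar_ge) auto
    have D: "Dr q d xs \<ge> \<beta>^3 * Dr pbar d xs" using h dnn Vs by (intro Dr_ge) auto
    have "\<beta>^3 * Ar pbar d r xs \<le> \<beta>^2 * Ar pbar d r xs"
      using True assms(6) Ap0 by (intro mult_right_mono) (auto simp: power_decreasing)
    then show ?thesis using A D Ep Eq by (simp add: algebra_simps)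
  qed
qed

end
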